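(* Let $\tau:\mathcal{X}\to\mathcal{X}$ be a continuous map on a compact metric space $(\mathcal{X},d)$ having at least one fixed point. Then $\tau$ is mixing if and only if $\tau$ is an asymptotic deformation.
   Context: $\tau^n$ is the $n$-fold composition of $\tau$. $\tau$ is mixing if there is $x_*\in\mathcal{X}$ with $\lim_{n\to\infty}\tau^n(x)=x_*$ for all $x\in\mathcal{X}$. $\tau$ is an asymptotic deformation if for all $x,y\in\mathcal{X}$ the sequence $d(\tau^n(x),\tau^n(y))$ converges and $\lim_{n\to\infty}d(\tau^n(x),\tau^n(y))\neq d(x,y)$ whenever $x\neq y$. *)

theory Defs
  imports "HOL-Analysis.Analysis"
begin

text \<open>The compact metric space is a compact subset X of a metric-space type,
  with the induced metric dist. The map tau is considered on X only.\<close>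

definition mixing :: "'a::metric_space set \<Rightarrow> ('a \<Rightarrow> 'a) \<Rightarrow> bool" where
  "mixing X \<tau> \<longleftrightarrow> (\<exists>xs\<in>X. \<forall>x\<in>X. (\<lambda>n. (\<tau> ^^ n) x) \<longlonglongrightarrow> xs)"

definition asymptotic_deformation :: "'a::metric_space set \<Rightarrow> ('a \<Rightarrow> 'a) \<Rightarrow> bool" where
  "asymptotic_deformation X \<tau> \<longleftrightarrow>
     (\<forall>x\<in>X. \<forall>y\<in>X. convergent (\<lambda>n. dist ((\<tau> ^^ n) x) ((\<tau> ^^ n) y)) \<and>
        (x \<noteq> y \<longrightarrow> lim (\<lambda>n. dist ((\<tau> ^^ n) x) ((\<tau> ^^ n) y)) \<noteq> dist x y))"

end

theory Submission
  imports Defs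
begin

lemma funpow_fix: "\<tau> p = p \<Longrightarrow> (\<tau> ^^ n) p = p"
  by (induction n) auto

lemma funpow_into: "\<tau> ` X \<subseteq> X \<Longrightarrow> x \<in> X \<Longrightarrow> (\<tau> ^^ n) x \<in> X"
  by (induction n) auto

lemma funpow_cont: "\<tau> ` X \<subseteq> X \<Longrightarrow> continuous_on X \<tau> \<Longrightarrow> continuous_on X (\<tau> ^^ n)"
proof (induction n)
  case 0 then show ?case by (simp add: continuous_on_id)
next
  case (Suc n)
  have "continuous_on X (\<tau> \<circ> (\<tau> ^^ n))"
  proof (rule continuous_on_compose)
    show "continuous_on X (\<tau> ^^ n)" using Suc by simp
    have "(\<tau> ^^ n) ` X \<subseteq> X" using funpow_into[OF Suc.prems(1)] by blast
    then show "continuous_on ((\<tau> ^^ n) ` X) \<tau>" using Suc.prems(2) continuous_on_subset by blast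
  qed
  then show ?case by simp
qed

theorem mainTheorem9:
  fixes X :: "'a::metric_space set" and \<tau> :: "'a \<Rightarrow> 'a"
  assumes "compact X"
    and "\<tau> ` X \<subseteq> X"
    and "continuous_on X \<tau>"
    and "\<exists>p\<in>X. \<tau> p = p"
  shows "mixing X \<tau> \<longleftrightarrow> asymptotic_deformation X \<tau>"
proof
  assume "mixing X \<tau>"
  then obtain xs where xs: "xs \<in> X" "\<And>x. x \<in> X \<Longrightarrow> (\<lambda>n. (\<tau> ^^ n) x) \<longlonglongrightarrow> xs"
    unfolding mixing_def by blast
  show "asymptotic_deformation X \<tau>" unfolding asymptotic_deformation_def
  proof (intro ballI conjI impI)
    fix x y assume "x \<in> X" "y \<in> X"
    then have l: "(\<lambda>n. dist ((\<tau> ^^ n) x) ((\<tau> ^^ n) y)) \<longlonglongrightarrow> 0"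
      using tendsto_dist[OF xs(2) xs(2)] by fastforce
    then show "convergent (\<lambda>n. dist ((\<tau> ^^ n) x) ((\<tau> ^^ n) y))"
      by (auto simp: convergent_def)
    assume "x \<noteq> y"
    then show "lim (\<lambda>n. dist ((\<tau> ^^ n) x) ((\<tau> ^^ n) y)) \<noteq> dist x y"
      using limI[OF l] by simp
  qed
next
  assume ad: "asymptotic_deformation X \<tau>"
  obtain p where p: "p \<in> X" "\<tau> p = p" using assms(4) by blast
  have fp: "\<And>n. (\<tau> ^^ n) p = p" using p(2) by (rule funpow_fix)
  show "mixing X \<tau>" unfolding mixing_def
  proof (intro bexI[OF _ p(1)] ballI)
    fix x assume x: "x \<in> X"
    define g where "g = (\<lambda>n. dist ((\<tau> ^^ n) x) p)"
    have "convergent (\<lambda>n. dist ((\<tau> ^^ n) x) ((\<tau> ^^ n) p))"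
      using ad x p(1) unfolding asymptotic_deformation_def by blast
    then have "convergent g" unfolding g_def by (simp add: fp)
    then obtain L where gL: "g \<longlonglongrightarrow> L" by (auto simp: convergent_def)
    have sc: "seq_compact X" using assms(1) by (rule compact_imp_seq_compact)
    have inX: "\<forall>n. (\<tau> ^^ n) x \<in> X" using funpow_into[OF assms(2) x] by blast
    obtain z r where z: "z \<in> X" "strict_mono r" "((\<lambda>n. (\<tau> ^^ n) x) \<circ> r) \<longlonglongrightarrow> z"
      by (rule seq_compactE[OF sc inX])
    have cm: "\<And>m. dist ((\<tau> ^^ m) z) p = L"
    proof -
      fix m
      have c: "continuous_on X (\<tau> ^^ m)" using funpow_cont[OF assms(2,3)] .
      have "(\<lambda>k. (\<tau> ^^ m) ((\<tau> ^^ r k) x)) \<longlonglongrightarrow> (\<tau> ^^ m) z"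
        by (rule continuous_on_tendsto_compose[OF c _ z(1)])
           (use z(3) funpow_into[OF assms(2) x] in \<open>auto simp: o_def\<close>)
      then have "(\<lambda>k. dist ((\<tau> ^^ (m + r k)) x) p) \<longlonglongrightarrow> dist ((\<tau> ^^ m) z) p"
        by (intro tendsto_dist) (auto simp: funpow_add)
      moreover have "(\<lambda>k. dist ((\<tau> ^^ (m + r k)) x) p) \<longlonglongrightarrow> L"
      proof -
        have "(\<lambda>n. g (n + m)) \<longlonglongrightarrow> L" using LIMSEQ_ignore_initial_segment[OF gL] .
        from LIMSEQ_subseq_LIMSEQ[OF this z(2)] show ?thesis
          by (simp add: g_def o_def add.commute)
      qed
      ultimately show "dist ((\<tau> ^^ m) z) p = L" by (rule LIMSEQ_unique)
    qed
    have "(\<lambda>n. dist ((\<tau> ^^ n) z) ((\<tau> ^^ n) p)) \<longlonglongrightarrow> L" using cm by (simp add: fp)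
    then have "lim (\<lambda>n. dist ((\<tau> ^^ n) z) ((\<tau> ^^ n) p)) = dist z p"
    proof -
      assume "(\<lambda>n. dist ((\<tau> ^^ n) z) ((\<tau> ^^ n) p)) \<longlonglongrightarrow> L"
      then have "lim (\<lambda>n. dist ((\<tau> ^^ n) z) ((\<tau> ^^ n) p)) = L" by (rule limI)
      then show ?thesis using cm[of 0] by simp
    qed
    moreover have "z \<noteq> p \<longrightarrow> lim (\<lambda>n. dist ((\<tau> ^^ n) z) ((\<tau> ^^ n) p)) \<noteq> dist z p"
      using ad z(1) p(1) unfolding asymptotic_deformation_def by blast
    ultimately have "z = p" by blast
    then have "L = 0" using cm[of 0] by simp
    then have "g \<longlonglongrightarrow> 0" using gL by simp
    then show "(\<lambda>n. (\<tau> ^^ n) x) \<longlonglongrightarrow> p" unfolding g_def by (rule tendsto_dist_iff[THEN iffD2])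
  qed
qed

end
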